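(* Let $X,Y,Z,W$ be mm-spaces and $F\in\mathcal F^2$. Then $$\square(X\times_FZ,Y\times_FW)\le\max\Big\{\square(X,Y)+\square(Z,W),\ 2F\big(\tfrac12\square(X,Y),\tfrac12\square(Z,W)\big)\Big\}.$$ In particular, for every $p\in[1,+\infty]$, $\square(X\times_pZ,Y\times_pW)\le\square(X,Y)+\square(Z,W)$.
   Context: An mm-space is a triple $(X,d_X,m_X)$ with $(X,d_X)$ complete separable metric space and $m_X$ a Borel probability measure. $\mathcal F^2$: continuous $F\colon[0,+\infty)^2\to[0,+\infty)$ such that $d_F((x,y),(x',y')):=F(d_X(x,x'),d_Y(y,y'))$ is a metric on $X\times Y$ for all metric spaces; $X\times_FY:=(X\times Y,d_F,m_X\otimes m_Y)$; $X\times_pY:=X\times_{F_p}Y$ with $F_p(s,t)=(s^p+t^p)^{1/p}$ ($p<\infty$), $F_\infty=\max$. Box distance: with $I=[0,1)$, Lebesgue measure $\mathcal L^1$, and parameters (Borel maps $\varphi\colon I\to X$ with $\varphi_*\mathcal L^1=m_X$), $\square(X,Y)$ is the infimum of $\varepsilon\ge0$ such that there exist parameters $\varphi$ of $X$, $\psi$ of $Y$ and a Borel $I_0\subset I$ with $\mathcal L^1(I_0)\ge1-\varepsilon$ and $|d_X(\varphi(s),\varphi(t))-d_Y(\psi(s),\psi(t))|\le\varepsilon$ for all $s,t\in I_0$. *)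

theory Defs
  imports "HOL-Analysis.Analysis" "HOL-Probability.Probability"
begin

text \<open>An mm-space is represented by a pair (d, m): a distance function d on the
  carrier space m and a Borel probability measure m.  The carrier of the space is
  space m.\<close>

type_synonym 'a mm = "('a \<Rightarrow> 'a \<Rightarrow> real) \<times> 'a measure"

definition mm_space :: "'a mm \<Rightarrow> bool" where
  "mm_space X \<longleftrightarrow> (case X of (d, m) \<Rightarrow>
     Metric_space (space m) d
   \<and> Metric_space.mcomplete (space m) d
   \<and> separable_space (Metric_space.mtopology (space m) d)
   \<and> sets m = sigma_sets (space m) {U. openin (Metric_space.mtopology (space m) d) U}
   \<and> prob_space m)"

text \<open>The class F^2.  Since the metric axioms only involve at most three points of
  each factor at a time, quantifying over all metric spaces on subsets of nat is
  equivalent to quantifying over all metric spaces.\<close>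

definition F2 :: "(real \<Rightarrow> real \<Rightarrow> real) set" where
  "F2 = {F. continuous_on ({0..} \<times> {0..}) (\<lambda>(s, t). F s t)
          \<and> (\<forall>s\<ge>0. \<forall>t\<ge>0. F s t \<ge> 0)
          \<and> (\<forall>(A::nat set) dA (B::nat set) dB.
               Metric_space A dA \<longrightarrow> Metric_space B dB \<longrightarrow>
               Metric_space (A \<times> B) (\<lambda>(x, y) (x', y'). F (dA x x') (dB y y')))}"

definition mm_prod :: "(real \<Rightarrow> real \<Rightarrow> real) \<Rightarrow> 'a mm \<Rightarrow> 'b mm \<Rightarrow> ('a \<times> 'b) mm" where
  "mm_prod F X Y = (case X of (dX, mX) \<Rightarrow> case Y of (dY, mY) \<Rightarrow>
     ((\<lambda>(x, y) (x', y'). F (dX x x') (dY y y')), mX \<Otimes>\<^sub>M mY))"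

definition Fp :: "ereal \<Rightarrow> real \<Rightarrow> real \<Rightarrow> real" where
  "Fp p s t = (if p = \<infinity> then max s t
               else (s powr real_of_ereal p + t powr real_of_ereal p) powr (1 / real_of_ereal p))"

definition unitI :: "real measure" where
  "unitI = restrict_space lborel {0..<1}"

definition parameter :: "'a mm \<Rightarrow> (real \<Rightarrow> 'a) \<Rightarrow> bool" where
  "parameter X \<phi> \<longleftrightarrow> \<phi> \<in> unitI \<rightarrow>\<^sub>M snd X \<and> distr unitI (snd X) \<phi> = snd X"

definition box :: "'a mm \<Rightarrow> 'b mm \<Rightarrow> real" where
  "box X Y = Inf {\<epsilon>. \<epsilon> \<ge> 0 \<and> (\<exists>\<phi> \<psi> I0. parameter X \<phi> \<and> parameter Y \<psi>
       \<and> I0 \<in> sets unitI \<and> measure unitI I0 \<ge> 1 - \<epsilon>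
       \<and> (\<forall>s\<in>I0. \<forall>t\<in>I0. \<bar>fst X (\<phi> s) (\<phi> t) - fst Y (\<psi> s) (\<psi> t)\<bar> \<le> \<epsilon>))}"

end

theory Submission
  imports Defs
begin


definition enc :: "(nat \<Rightarrow> bool) \<Rightarrow> real" where
  "enc b = (\<Sum>j. of_bool (b j) / 4 ^ Suc j)"

definition dec :: "real \<Rightarrow> nat \<Rightarrow> bool" where
  "dec y n = (\<lfloor>4 ^ Suc n * y\<rfloor> - 4 * \<lfloor>4 ^ n * y\<rfloor> = 1)"

lemma summable_enc: "summable (\<lambda>j. of_bool (b j) / (4::real) ^ Suc j)"
proof (rule summable_comparison_test[where g="\<lambda>j. (1/4::real) ^ Suc j"])
  show "\<exists>N. \<forall>n\<ge>N. norm (of_bool (b n) / (4::real) ^ Suc n) \<le> (1 / 4) ^ Suc n"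
    by (auto simp: power_divide)
  show "summable (\<lambda>j. (1/4::real) ^ Suc j)"
    by (rule summable_ignore_initial_segment[where k=1, simplified]) (rule summable_geometric, simp)
qed

lemma tail_bound: "0 \<le> (\<Sum>j. of_bool (b j) / (4::real) ^ Suc j) \<and> (\<Sum>j. of_bool (b j) / (4::real) ^ Suc j) \<le> 1/3"
proof
  show "0 \<le> (\<Sum>j. of_bool (b j) / (4::real) ^ Suc j)"
    by (rule suminf_nonneg[OF summable_enc]) simp
  have g: "(\<lambda>j. (1/4::real) ^ Suc j) sums ((1/4) / (1 - 1/4))"
    using sums_mult[OF geometric_sums[of "1/4::real"], of "1/4"] by (simp add: power_Suc)
  have "(\<Sum>j. of_bool (b j) / (4::real) ^ Suc j) \<le> (\<Sum>j. (1/4::real) ^ Suc j)"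
    by (rule suminf_le[OF _ summable_enc sums_summable[OF g]]) (simp add: power_divide)
  also have "\<dots> = 1/3" using sums_unique[OF g] by simp
  finally show "(\<Sum>j. of_bool (b j) / (4::real) ^ Suc j) \<le> 1/3" .
qed

fun Sd :: "(nat \<Rightarrow> bool) \<Rightarrow> nat \<Rightarrow> int" where
  "Sd b 0 = 0"
| "Sd b (Suc n) = 4 * Sd b n + of_bool (b n)"

lemma partial_Sd: "(\<Sum>j<N. of_bool (b j) / (4::real) ^ Suc j) = real_of_int (Sd b N) / 4 ^ N"
  by (induction N) (simp_all add: field_simps)

lemma floor_enc: "\<lfloor>4 ^ N * enc b\<rfloor> = Sd b N"
proof -
  define T where "T = (\<Sum>j. of_bool (b (j + N)) / (4::real) ^ Suc j)"
  have T: "0 \<le> T" "T \<le> 1/3" using tail_bound[of "\<lambda>j. b (j + N)"] by (simp_all add: T_def)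
  have "enc b = (\<Sum>j. of_bool (b (j + N)) / (4::real) ^ Suc (j + N)) + (\<Sum>j<N. of_bool (b j) / (4::real) ^ Suc j)"
    unfolding enc_def by (rule suminf_split_initial_segment[OF summable_enc])
  also have "(\<Sum>j. of_bool (b (j + N)) / (4::real) ^ Suc (j + N)) = T / 4 ^ N"
  proof -
    have "(\<lambda>j. of_bool (b (j + N)) / (4::real) ^ Suc (j + N)) = (\<lambda>j. (of_bool (b (j + N)) / (4::real) ^ Suc j) * (1 / 4 ^ N))"
      by (auto simp: power_add field_simps)
    then show ?thesis unfolding T_def
      using suminf_mult2[OF summable_enc[of "\<lambda>j. b (j + N)"], of "1/4^N"] by simp
  qed
  finally have "enc b = T / 4 ^ N + real_of_int (Sd b N) / 4 ^ N"
    by (simp only: partial_Sd)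
  then have "4 ^ N * enc b = T + real_of_int (Sd b N)"
    by (simp add: field_simps)
  then show ?thesis using T by (simp add: floor_unique)
qed

lemma dec_enc: "dec (enc b) = b"
  by (rule ext) (simp only: dec_def floor_enc, simp)

lemma dec_measurable[measurable]: "Measurable.pred borel (\<lambda>y. dec y n)"
  unfolding dec_def by measurable

lemma enc_measurable:
  assumes "\<And>j. Measurable.pred M (\<lambda>x. b x j)"
  shows "(\<lambda>x. enc (b x)) \<in> borel_measurable M"
  unfolding enc_def using assms by measurable



lemma param_from_coding:
  fixes M :: "'a measure"
  assumes P: "prob_space M" and g: "g \<in> M \<rightarrow>\<^sub>M borel" and h: "h \<in> (borel::real measure) \<rightarrow>\<^sub>M M"
    and hg: "\<And>x. x \<in> space M \<Longrightarrow> h (g x) = x"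
  shows "\<exists>\<phi>. \<phi> \<in> unitI \<rightarrow>\<^sub>M M \<and> distr unitI M \<phi> = M"
proof -
  define M' where "M' = distr M borel g"
  have rd: "real_distribution M'"
    unfolding real_distribution_def real_distribution_axioms_def M'_def using P g
    by (auto intro: prob_space.prob_space_distr)
  then interpret cdf_distribution M' unfolding cdf_distribution_def .
  define Q where "Q = (\<lambda>\<omega>::real. Inf {x. \<omega> \<le> cdf M' x})"
  have D: "distr (restrict_space lborel {0<..<1}) borel Q = M'"
    unfolding Q_def by (rule distr_I_eq_M)
  have Qm: "Q \<in> borel_measurable (restrict_space borel {0<..<1})"
    unfolding Q_def by (rule measurable_CI)
  define Q' where "Q' = (\<lambda>s. indicator {0<..<1::real} s *\<^sub>R Q s)"
  have Q'm: "Q' \<in> borel_measurable borel"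
    unfolding Q'_def using Qm borel_measurable_restrict_space_iff[of "{0<..<1::real}" borel Q]
    by simp
  have Q'm2: "Q' \<in> unitI \<rightarrow>\<^sub>M borel"
    unfolding unitI_def
    by (rule measurable_restrict_space1) (use Q'm in simp)
  have E: "distr unitI borel Q' = distr (restrict_space lborel {0<..<1}) borel Q"
  proof (rule measure_eqI)
    show "sets (distr unitI borel Q') = sets (distr (restrict_space lborel {0<..<1}) borel Q)" by simp
  next
    fix A assume A: "A \<in> sets (distr unitI borel Q')"
    hence Ab: "A \<in> sets borel" by simp
    have m1: "Q -` A \<inter> {0<..<1} \<in> sets borel"
    proof -
      have "Q -` A \<inter> {0<..<1} \<in> sets (restrict_space borel {0<..<1::real})"
        using measurable_sets[OF Qm Ab] by (simp add: space_restrict_space)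
      then show ?thesis by (auto simp: sets_restrict_space)
    qed
    have eq: "Q' -` A \<inter> {0..<1} = (Q -` A \<inter> {0<..<1}) \<union> (if 0 \<in> A then {0} else {})"
      by (rule set_eqI, case_tac "x = 0") (auto simp: Q'_def indicator_def)
    have "emeasure (distr unitI borel Q') A = emeasure lborel (Q' -` A \<inter> {0..<1})"
      using Ab Q'm2 by (simp add: emeasure_distr unitI_def emeasure_restrict_space space_restrict_space Int_commute)
    also have "\<dots> = emeasure lborel (Q -` A \<inter> {0<..<1})"
      unfolding eq using m1 emeasure_Un_null_set[of _ lborel "{0::real}"] finite_imp_null_set_lborel[of "{0::real}"] by (cases "0 \<in> A") simp_all
    also have "\<dots> = emeasure (distr (restrict_space lborel {0<..<1}) borel Q) A"
      using Ab Qm m1 by (simp add: emeasure_distr emeasure_restrict_space space_restrict_space Int_commute)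
    finally show "emeasure (distr unitI borel Q') A = emeasure (distr (restrict_space lborel {0<..<1}) borel Q) A" .
  qed
  have hQ: "(h \<circ> Q') \<in> unitI \<rightarrow>\<^sub>M M"
    using Q'm2 h by (rule measurable_comp)
  have "distr unitI M (h \<circ> Q') = distr (distr unitI borel Q') M h"
    using Q'm2 h by (simp add: distr_distr)
  also have "\<dots> = distr M' M h" using E D by simp
  also have "\<dots> = distr M M (h \<circ> g)" unfolding M'_def using g h by (simp add: distr_distr)
  also have "\<dots> = distr M M (\<lambda>x. x)" by (rule distr_cong) (auto simp: hg)
  also have "\<dots> = M" by (rule distr_id)
  finally show ?thesis using hQ by blast
qed



lemma pred_comp2:
  fixes a b :: "'x \<Rightarrow> nat"
  assumes "a \<in> M \<rightarrow>\<^sub>M count_space UNIV" "b \<in> M \<rightarrow>\<^sub>M count_space UNIV"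
  shows "Measurable.pred M (\<lambda>y. P (a y) (b y))"
proof (rule measurable_compose_countable[where f="\<lambda>i y. P i (b y)", OF _ assms(1)])
  fix i show "Measurable.pred M (\<lambda>y. P i (b y))"
    by (rule measurable_compose_countable[where f="\<lambda>j y. P i j", OF _ assms(2)]) simp
qed

lemma polish_coding:
  fixes d :: "'a \<Rightarrow> 'a \<Rightarrow> real" and m :: "'a measure"
  assumes ms: "Metric_space (space m) d" and cp: "Metric_space.mcomplete (space m) d"
    and sep: "separable_space (Metric_space.mtopology (space m) d)"
    and sig: "sets m = sigma_sets (space m) {U. openin (Metric_space.mtopology (space m) d) U}"
    and ne: "space m \<noteq> {}"
  shows "\<exists>g h. g \<in> m \<rightarrow>\<^sub>M borel \<and> h \<in> (borel::real measure) \<rightarrow>\<^sub>M m \<and> (\<forall>x\<in>space m. h (g x) = x)"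
proof -
  interpret Metric_space "space m" d by (rule ms)
  obtain C where C: "countable C" "C \<subseteq> space m" "mtopology closure_of C = space m"
    using sep unfolding separable_space_def by auto
  have Cne: "C \<noteq> {}" using C(3) ne by auto
  define q where "q = from_nat_into C"
  have qS: "q k \<in> space m" for k using C Cne by (simp add: q_def from_nat_into subsetD)
  have dense: "\<exists>k. d x (q k) < r" if xr: "x \<in> space m" "r > 0" for x r
  proof -
    obtain y where "y \<in> C" "y \<in> mball x r" using C(3) xr unfolding metric_closure_of by blast
    moreover then obtain k where "y = q k" unfolding q_def by (metis C(1) from_nat_into_surj)
    ultimately show ?thesis by auto
  qed
  have open_sets: "U \<in> sets m" if "openin mtopology U" for U
    using that sig by (simp add: sigma_sets.Basic)
  define bit where "bit x j = (case prod_decode j of (k, n) \<Rightarrow> d x (q k) < 1 / Suc n)" for x j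
  define g where "g x = enc (bit x)" for x
  have g_meas: "g \<in> m \<rightarrow>\<^sub>M borel"
    unfolding g_def
  proof (rule enc_measurable)
    fix j
    obtain k n where kn: "prod_decode j = (k, n)" by fastforce
    have "{x \<in> space m. bit x j} = mball (q k) (1 / Suc n)"
      using qS by (auto simp: bit_def kn mball_def commute)
    then show "Measurable.pred m (\<lambda>x. bit x j)"
      unfolding pred_def using open_sets by simp
  qed
  define c where "c n y = (LEAST k. dec y (prod_encode (k, n)))" for n y
  define p where "p y n = q (c n y)" for y n
  have c_meas: "c n \<in> borel \<rightarrow>\<^sub>M count_space UNIV" for n
    unfolding c_def by (rule measurable_Least) measurable
  define h where "h y = (if MCauchy (p y) then (SOME z. limitin mtopology (p y) z sequentially) else q 0)" for y
  have pS: "range (p y) \<subseteq> space m" for y using qS by (auto simp: p_def)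
  have hS: "h y \<in> space m" for y
  proof (cases "MCauchy (p y)")
    case True
    then obtain z where "limitin mtopology (p y) z sequentially" using cp unfolding mcomplete_def by blast
    then have "limitin mtopology (p y) (SOME z. limitin mtopology (p y) z sequentially) sequentially"
      by (rule someI)
    then show ?thesis using True by (simp add: h_def limitin_metric)
  next
    case False then show ?thesis using qS by (simp add: h_def)
  qed
  have hlim: "limitin mtopology (p y) (h y) sequentially" if MC: "MCauchy (p y)" for y
  proof -
    obtain z where "limitin mtopology (p y) z sequentially" using cp MC unfolding mcomplete_def by blast
    then have "limitin mtopology (p y) (SOME z. limitin mtopology (p y) z sequentially) sequentially"
      by (rule someI)
    then show ?thesis using MC by (simp add: h_def)
  qed
  have hg: "h (g x) = x" if x: "x \<in> space m" for x
  proof -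
    have cb: "dec (g x) (prod_encode (k, n)) = (d x (q k) < 1 / Suc n)" for k n
      by (simp add: g_def dec_enc bit_def)
    have dn: "d x (p (g x) n) < 1 / Suc n" for n
    proof -
      obtain k where "d x (q k) < 1 / Suc n" using dense[OF x, of "1 / Suc n"] by auto
      then have "d x (q (LEAST k. d x (q k) < 1 / Suc n)) < 1 / Suc n" by (rule LeastI)
      then show ?thesis by (simp add: p_def c_def cb)
    qed
    have L: "limitin mtopology (p (g x)) x sequentially"
      unfolding limitin_metric
    proof (intro conjI allI impI x)
      fix e :: real assume "e > 0"
      then obtain N where N: "1 / Suc N < e" using nat_approx_posE by blast
      show "\<forall>\<^sub>F n in sequentially. p (g x) n \<in> space m \<and> d (p (g x) n) x < e"
      proof (rule eventually_sequentiallyI[of N])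
        fix n assume "N \<le> n"
        then have "1 / real (Suc n) \<le> 1 / Suc N" by (simp add: frac_le)
        then show "p (g x) n \<in> space m \<and> d (p (g x) n) x < e"
          using dn[of n] N pS[of "g x"] by (auto simp: commute)
      qed
    qed
    then have "MCauchy (p (g x))" using convergent_imp_MCauchy pS by blast
    then have "limitin mtopology (p (g x)) (h (g x)) sequentially" by (rule hlim)
    then show ?thesis using limitin_metric_unique[OF _ L] by simp
  qed
  have h_meas: "h \<in> borel \<rightarrow>\<^sub>M m"
  proof (rule measurable_sigma_sets[OF sig])
    show "{U. openin mtopology U} \<subseteq> Pow (space m)" using openin_subset by force
    show "h \<in> space borel \<rightarrow> space m" using hS by auto
  next
    fix U assume "U \<in> {U. openin mtopology U}"
    then have U: "openin mtopology U" by simp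
    define E where "E y = (\<exists>k n. mball (q k) (2 / Suc n) \<subseteq> U \<and> (\<exists>N. \<forall>i\<ge>N. d (p y i) (q k) < 1 / Suc n))" for y
    define Cy where "Cy y = (\<forall>e::nat. \<exists>N. \<forall>i\<ge>N. \<forall>j\<ge>N. d (p y i) (p y j) < 1 / Suc e)" for y
    have CyC: "Cy y = MCauchy (p y)" for y
    proof
      assume "Cy y"
      show "MCauchy (p y)" unfolding MCauchy_def
      proof (intro conjI pS allI impI)
        fix e :: real assume "e > 0"
        then obtain k where k: "1 / Suc k < e" using nat_approx_posE by blast
        obtain N where "\<forall>i\<ge>N. \<forall>j\<ge>N. d (p y i) (p y j) < 1 / Suc k" using \<open>Cy y\<close> Cy_def by blast
        then show "\<exists>N. \<forall>n n'. N \<le> n \<longrightarrow> N \<le> n' \<longrightarrow> d (p y n) (p y n') < e"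
          using k by (meson less_trans order.trans)
      qed
    next
      assume "MCauchy (p y)"
      then have "\<forall>\<epsilon>>0. \<exists>N. \<forall>n n'. N \<le> n \<longrightarrow> N \<le> n' \<longrightarrow> d (p y n) (p y n') < \<epsilon>"
        unfolding MCauchy_def by blast
      then show "Cy y" unfolding Cy_def by (meson of_nat_0_less_iff zero_less_Suc divide_pos_pos zero_less_one)
    qed
    have key: "h y \<in> U \<longleftrightarrow> (Cy y \<and> E y) \<or> (\<not> Cy y \<and> q 0 \<in> U)" for y
    proof (cases "MCauchy (p y)")
      case False then show ?thesis by (simp add: CyC h_def)
    next
      case True
      have L: "limitin mtopology (p y) (h y) sequentially" by (rule hlim[OF True])
      have hy: "h y \<in> space m" by (rule hS)
      have conv: "((\<lambda>i. d (p y i) z) \<longlongrightarrow> d (h y) z) sequentially" if zS: "z \<in> space m" for z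
      proof -
        have lim0: "((\<lambda>i. d (p y i) (h y)) \<longlongrightarrow> 0) sequentially" using L by (simp add: limitin_metric_dist_null)
        have bd:  "norm (d (p y i) z - d (h y) z) \<le> d (p y i) (h y)" for i
        proof -
          have a: "p y i \<in> space m" using pS by auto
          have "d (p y i) z \<le> d (p y i) (h y) + d (h y) z" using triangle[OF a hy zS] .
          moreover have "d (h y) z \<le> d (h y) (p y i) + d (p y i) z" using triangle[OF hy a zS] .
          ultimately show ?thesis using commute[of "h y" "p y i"] unfolding real_norm_def abs_le_iff by linarith
        qed
        have "((\<lambda>i. d (p y i) z - d (h y) z) \<longlongrightarrow> 0) sequentially"
          by (rule Lim_null_comparison[OF always_eventually lim0]) (use bd in blast)
        then show ?thesis by (simp add: LIM_zero_iff)
      qed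
      show ?thesis
      proof
        assume "h y \<in> U"
        then obtain r where r: "r > 0" "mball (h y) r \<subseteq> U" using U openin_mtopology by blast
        obtain n where n0: "1 / Suc n < r / 3" using nat_approx_posE[of "r/3"] r by auto
        have n: "3 / Suc n < r" using n0 by (simp add: divide_simps)
        obtain k where k: "d (h y) (q k) < 1 / Suc n" using dense[OF hy, of "1 / Suc n"] by auto
        have "mball (q k) (2 / Suc n) \<subseteq> U"
        proof
          fix z assume "z \<in> mball (q k) (2 / Suc n)"
          then have "z \<in> space m" "d (q k) z < 2 / Suc n" by auto
          moreover have "d (h y) z \<le> d (h y) (q k) + d (q k) z" using triangle hy qS \<open>z \<in> space m\<close> by blast
          moreover have "1 / Suc n + 2 / Suc n = 3 / real (Suc n)" by (simp add: add_divide_distrib[symmetric])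
          ultimately have "d (h y) z < r" using k n by linarith
          then show "z \<in> U" using r hy \<open>z \<in> space m\<close> by auto
        qed
        moreover have "\<exists>N. \<forall>i\<ge>N. d (p y i) (q k) < 1 / Suc n"
          using order_tendstoD(2)[OF conv[OF qS[of k]] k] by (simp add: eventually_sequentially)
        ultimately show "(Cy y \<and> E y) \<or> (\<not> Cy y \<and> q 0 \<in> U)" using True CyC E_def by blast
      next
        assume "(Cy y \<and> E y) \<or> (\<not> Cy y \<and> q 0 \<in> U)"
        then have "E y" using True CyC by blast
        then obtain k n N where kn: "mball (q k) (2 / Suc n) \<subseteq> U" "\<forall>i\<ge>N. d (p y i) (q k) < 1 / Suc n"
          unfolding E_def by blast
        have "d (h y) (q k) \<le> 1 / Suc n"
          using kn(2) by (intro tendsto_upperbound[OF conv[OF qS[of k]]]) (auto simp: eventually_sequentially intro: less_imp_le)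
        also have "\<dots> < 2 / Suc n" by (simp add: divide_strict_right_mono)
        finally show "h y \<in> U" using kn(1) hy qS by (auto simp: mball_def commute)
      qed
    qed
    have pm: "Measurable.pred borel (\<lambda>y. P (c i y) (c j y))" for P i j
      by (rule pred_comp2[OF c_meas c_meas])
    have "Measurable.pred borel (\<lambda>y. d (p y i) (p y j) < r)" for i j r
      unfolding p_def by (rule pm)
    moreover have "Measurable.pred borel (\<lambda>y. d (p y i) (q k) < r)" for i k r
      unfolding p_def using pm[of "\<lambda>a b. d (q a) (q k) < r" i i] by simp
    ultimately have "Measurable.pred borel (\<lambda>y. (Cy y \<and> E y) \<or> (\<not> Cy y \<and> q 0 \<in> U))"
      unfolding Cy_def E_def by measurable
    then have "Measurable.pred borel (\<lambda>y. h y \<in> U)" using key by simp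
    then show "h -` U \<inter> space borel \<in> sets borel" by (simp add: pred_def vimage_def Collect_conj_eq[symmetric])
  qed
  show ?thesis using g_meas h_meas hg by blast
qed



definition bt :: "nat \<Rightarrow> real \<Rightarrow> bool" where
  "bt n x = (\<lfloor>2 ^ Suc n * x\<rfloor> - 2 * \<lfloor>2 ^ n * x\<rfloor> = 1)"

lemma floor_double: "\<lfloor>2 * (y::real)\<rfloor> = 2 * \<lfloor>y\<rfloor> \<or> \<lfloor>2 * y\<rfloor> = 2 * \<lfloor>y\<rfloor> + 1"
proof -
  have a: "real_of_int \<lfloor>y\<rfloor> \<le> y" "y < real_of_int \<lfloor>y\<rfloor> + 1" by linarith+
  have "2 * \<lfloor>y\<rfloor> \<le> \<lfloor>2 * y\<rfloor>" using a by (intro le_floor_iff[THEN iffD2]) simp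
  moreover have "\<lfloor>2 * y\<rfloor> < 2 * \<lfloor>y\<rfloor> + 2" by (simp add: floor_less_iff) (use a in linarith)
  ultimately show ?thesis by linarith
qed

lemma floor_bt: "\<lfloor>2 ^ Suc n * x\<rfloor> = 2 * \<lfloor>2 ^ n * x\<rfloor> + of_bool (bt n x)"
  using floor_double[of "2 ^ n * x"] by (auto simp: bt_def mult.assoc)

lemma partial_bt: "x \<in> {0..<1} \<Longrightarrow> (\<Sum>n<N. of_bool (bt n x) / (2::real) ^ Suc n) = real_of_int \<lfloor>2 ^ N * x\<rfloor> / 2 ^ N"
proof (induction N)
  case 0 then show ?case by (simp add: floor_eq_iff)
next
  case (Suc N)
  have "real_of_int \<lfloor>2 ^ Suc N * x\<rfloor> = 2 * real_of_int \<lfloor>2 ^ N * x\<rfloor> + of_bool (bt N x)"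
    unfolding floor_bt by simp
  then show ?case using Suc by (simp add: field_simps)
qed

lemma sums_bt: assumes x: "x \<in> {0..<1::real}" shows "(\<lambda>n. of_bool (bt n x) / (2::real) ^ Suc n) sums x"
  unfolding sums_def
proof -
  have "(\<lambda>N. real_of_int \<lfloor>2 ^ N * x\<rfloor> / 2 ^ N) \<longlonglongrightarrow> x"
  proof -
    have b: "norm (real_of_int \<lfloor>2 ^ N * x\<rfloor> / 2 ^ N - x) \<le> (1/2) ^ N" for N
    proof -
      have "real_of_int \<lfloor>2 ^ N * x\<rfloor> \<le> 2 ^ N * x" "2 ^ N * x < real_of_int \<lfloor>2 ^ N * x\<rfloor> + 1" by linarith+
      then have "\<bar>real_of_int \<lfloor>2 ^ N * x\<rfloor> - 2 ^ N * x\<bar> \<le> 1" by linarith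
      moreover have "real_of_int \<lfloor>2 ^ N * x\<rfloor> / 2 ^ N - x = (real_of_int \<lfloor>2 ^ N * x\<rfloor> - 2 ^ N * x) / 2 ^ N"
        by (simp add: field_simps)
      ultimately have "\<bar>real_of_int \<lfloor>2 ^ N * x\<rfloor> / 2 ^ N - x\<bar> \<le> 1 / 2 ^ N"
        by (simp add: abs_divide divide_right_mono)
      then show ?thesis by (simp add: power_one_over)
    qed
    have "(\<lambda>N. real_of_int \<lfloor>2 ^ N * x\<rfloor> / 2 ^ N - x) \<longlonglongrightarrow> 0"
      by (rule Lim_null_comparison[OF always_eventually LIMSEQ_power_zero]) (use b in auto)
    then show ?thesis by (simp add: LIM_zero_iff)
  qed
  then show "(\<lambda>N. \<Sum>n<N. of_bool (bt n x) / (2::real) ^ Suc n) \<longlonglongrightarrow> x"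
    using partial_bt[OF x] by simp
qed

lemma bt_measurable[measurable]: "Measurable.pred borel (bt n)"
  unfolding bt_def by measurable

lemma pred_unitI: "Measurable.pred borel P \<Longrightarrow> Measurable.pred unitI P"
  unfolding unitI_def by (rule measurable_restrict_space1) simp

lemma unitI_fun: "f \<in> borel_measurable borel \<Longrightarrow> (\<And>x. f x \<in> {0..<1}) \<Longrightarrow> f \<in> borel \<rightarrow>\<^sub>M unitI"
  unfolding unitI_def by (rule measurable_restrict_space2) auto

lemma square_coding:
  "\<exists>g h. g \<in> (unitI \<Otimes>\<^sub>M unitI) \<rightarrow>\<^sub>M borel \<and> h \<in> (borel::real measure) \<rightarrow>\<^sub>M (unitI \<Otimes>\<^sub>M unitI)
     \<and> (\<forall>x\<in>space (unitI \<Otimes>\<^sub>M unitI). h (g x) = x)"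
proof -
  define b where "b p j = (if even j then bt (j div 2) (fst p) else bt (j div 2) (snd p))" for p :: "real \<times> real" and j
  define g where "g p = enc (b p)" for p
  have g_meas: "g \<in> (unitI \<Otimes>\<^sub>M unitI) \<rightarrow>\<^sub>M borel"
    unfolding g_def
  proof (rule enc_measurable)
    fix j
    have f: "Measurable.pred (unitI \<Otimes>\<^sub>M unitI) (\<lambda>p. bt (j div 2) (fst p))"
      by (rule measurable_compose[OF measurable_fst pred_unitI[OF bt_measurable]])
    have s: "Measurable.pred (unitI \<Otimes>\<^sub>M unitI) (\<lambda>p. bt (j div 2) (snd p))"
      by (rule measurable_compose[OF measurable_snd pred_unitI[OF bt_measurable]])
    show "Measurable.pred (unitI \<Otimes>\<^sub>M unitI) (\<lambda>x. b x j)"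
      unfolding b_def using f s by (cases "even j") simp_all
  qed
  define u where "u z = (\<Sum>n. of_bool (dec z (2 * n)) / (2::real) ^ Suc n)" for z
  define v where "v z = (\<Sum>n. of_bool (dec z (2 * n + 1)) / (2::real) ^ Suc n)" for z
  define ok where "ok z = (u z \<in> {0..<1} \<and> v z \<in> {0..<1})" for z
  define h where "h z = (if ok z then u z else 0, if ok z then v z else 0)" for z
  have um: "u \<in> borel_measurable borel" unfolding u_def by measurable
  have vm: "v \<in> borel_measurable borel" unfolding v_def by measurable
  have okm: "Measurable.pred borel ok" unfolding ok_def using um vm by measurable
  have h1: "(\<lambda>z. if ok z then u z else 0) \<in> borel \<rightarrow>\<^sub>M unitI"
    by (rule unitI_fun) (use um okm in measurable, auto simp: ok_def)
  have h2: "(\<lambda>z. if ok z then v z else 0) \<in> borel \<rightarrow>\<^sub>M unitI"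
    by (rule unitI_fun) (use vm okm in measurable, auto simp: ok_def)
  have h_meas: "h \<in> borel \<rightarrow>\<^sub>M (unitI \<Otimes>\<^sub>M unitI)"
    unfolding h_def by (rule measurable_Pair[OF h1 h2])
  have hg: "h (g p) = p" if p: "p \<in> space (unitI \<Otimes>\<^sub>M unitI)" for p
  proof -
    have x: "fst p \<in> {0..<1}" and y: "snd p \<in> {0..<1}"
      using p by (auto simp: space_pair_measure unitI_def space_restrict_space)
    have dg: "dec (g p) = b p" by (simp add: g_def dec_enc)
    have "u (g p) = fst p" unfolding u_def dg b_def using sums_unique[OF sums_bt[OF x]] by simp
    moreover have "v (g p) = snd p" unfolding v_def dg b_def using sums_unique[OF sums_bt[OF y]] by simp
    ultimately show ?thesis using x y by (simp add: h_def ok_def)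
  qed
  show ?thesis using g_meas h_meas hg by blast
qed



lemma metric_line:
  fixes x :: "nat \<Rightarrow> real" assumes "\<delta> > 0"
  shows "Metric_space UNIV (\<lambda>i j. \<bar>x i - x j\<bar> + (if i = j then 0 else \<delta>))"
  unfolding Metric_space_def
proof (intro conjI allI impI)
  fix i j k :: nat
  show "\<bar>x i - x k\<bar> + (if i = k then 0 else \<delta>) \<le> \<bar>x i - x j\<bar> + (if i = j then 0 else \<delta>) + (\<bar>x j - x k\<bar> + (if j = k then 0 else \<delta>))"
  proof -
    have t: "\<bar>x i - x k\<bar> \<le> \<bar>x i - x j\<bar> + \<bar>x j - x k\<bar>" by linarith
    show ?thesis using t assms by (cases "i = k"; cases "i = j"; cases "j = k") auto
  qed
qed (use assms in auto)

lemma metric_iso: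
  assumes "0 < \<alpha>" "0 < \<beta>" "\<alpha> \<le> 2 * \<beta>"
  shows "Metric_space (UNIV::nat set) (\<lambda>i j. if i = j then 0 else if {i, j} = {0, 1} then \<alpha> else \<beta>)"
  unfolding Metric_space_def
proof (intro conjI allI impI)
  fix i j k :: nat
  show "(if i = k then 0 else if {i, k} = {0, 1} then \<alpha> else \<beta>) \<le> (if i = j then 0 else if {i, j} = {0, 1} then \<alpha> else \<beta>) + (if j = k then 0 else if {j, k} = {0, 1} then \<alpha> else \<beta>)"
    using assms by (cases "i = k"; cases "i = j"; cases "j = k"; cases "{i, k} = {0, 1}"; cases "{i, j} = {0, 1}"; cases "{j, k} = {0, 1}") (auto simp: doubleton_eq_iff)
qed (use assms in \<open>auto simp: insert_commute\<close>)

lemma F2_prod_tri: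
  assumes F: "F \<in> F2" and A: "Metric_space (UNIV::nat set) dA" and B: "Metric_space (UNIV::nat set) dB"
  shows "F (dA i k) (dB i' k') \<le> F (dA i j) (dB i' j') + F (dA j k) (dB j' k')"
proof -
  have "Metric_space (UNIV \<times> UNIV) (\<lambda>(x, y) (x', y'). F (dA x x') (dB y y'))"
    using F A B unfolding F2_def by blast
  from Metric_space.triangle[OF this, of "(i, i')" "(j, j')" "(k, k')"] show ?thesis by simp
qed

lemma F2_cont:
  assumes F: "F \<in> F2" and st: "0 \<le> s" "0 \<le> t"
  shows "((\<lambda>\<delta>. F (s + \<delta>) (t + \<delta>)) \<longlongrightarrow> F s t) (at_right 0)"
proof -
  have c: "continuous_on ({0..} \<times> {0..}) (\<lambda>(s, t). F s t)" using F unfolding F2_def by blast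
  have g: "((\<lambda>\<delta>. (s + \<delta>, t + \<delta>)) \<longlongrightarrow> (s, t)) (at_right (0::real))"
    by (auto intro!: tendsto_eq_intros tendsto_Pair)
  have ev: "eventually (\<lambda>\<delta>. (s + \<delta>, t + \<delta>) \<in> {0..} \<times> {0..}) (at_right (0::real))"
    using eventually_at_right_less[of "0::real"] by eventually_elim (use st in auto)
  show ?thesis using continuous_on_tendsto_compose[OF c g _ ev] st by simp
qed

lemma F2_tri:
  assumes F: "F \<in> F2" and pos: "0 \<le> a" "0 \<le> a'" "0 \<le> b" "0 \<le> b'"
  shows "F a b \<le> F a' b' + F \<bar>a - a'\<bar> \<bar>b - b'\<bar>"
proof -
  define xa where "xa = (\<lambda>i::nat. if i = 1 then a' else if i = 2 then a else 0)"
  define xb where "xb = (\<lambda>i::nat. if i = 1 then b' else if i = 2 then b else 0)"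
  have ineq: "F (a + \<delta>) (b + \<delta>) \<le> F (a' + \<delta>) (b' + \<delta>) + F (\<bar>a - a'\<bar> + \<delta>) (\<bar>b - b'\<bar> + \<delta>)" if "\<delta> > 0" for \<delta>
  proof -
    have "F (\<bar>xa 0 - xa 2\<bar> + \<delta>) (\<bar>xb 0 - xb 2\<bar> + \<delta>) \<le> F (\<bar>xa 0 - xa 1\<bar> + \<delta>) (\<bar>xb 0 - xb 1\<bar> + \<delta>) + F (\<bar>xa 1 - xa 2\<bar> + \<delta>) (\<bar>xb 1 - xb 2\<bar> + \<delta>)"
      using F2_prod_tri[OF F metric_line[OF that, of xa] metric_line[OF that, of xb], of 0 2 0 2 1 1] by simp
    then show ?thesis using pos by (simp add: xa_def xb_def abs_minus_commute)
  qed
  have "((\<lambda>\<delta>. F (a' + \<delta>) (b' + \<delta>) + F (\<bar>a - a'\<bar> + \<delta>) (\<bar>b - b'\<bar> + \<delta>)) \<longlongrightarrow> F a' b' + F \<bar>a - a'\<bar> \<bar>b - b'\<bar>) (at_right 0)"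
    using pos by (intro tendsto_add F2_cont[OF F]) auto
  moreover have "eventually (\<lambda>\<delta>. F (a + \<delta>) (b + \<delta>) \<le> F (a' + \<delta>) (b' + \<delta>) + F (\<bar>a - a'\<bar> + \<delta>) (\<bar>b - b'\<bar> + \<delta>)) (at_right (0::real))"
    using eventually_at_right_less[of "0::real"] by eventually_elim (rule ineq)
  ultimately show ?thesis using F2_cont[OF F pos(1,3)] by (intro tendsto_le[OF trivial_limit_at_right_real]) auto
qed

lemma F2_iso:
  assumes F: "F \<in> F2" and u: "0 \<le> u" "u \<le> e1" and v: "0 \<le> v" "v \<le> e2"
  shows "F u v \<le> 2 * F (e1 / 2) (e2 / 2)"
proof -
  have ineq: "F (u + \<delta>) (v + \<delta>) \<le> 2 * F (e1 / 2 + \<delta>) (e2 / 2 + \<delta>)" if "\<delta> > 0" for \<delta>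
  proof -
    have A: "Metric_space (UNIV::nat set) (\<lambda>i j. if i = j then 0 else if {i, j} = {0, 1} then u + \<delta> else e1 / 2 + \<delta>)"
      using u that by (intro metric_iso) auto
    have B: "Metric_space (UNIV::nat set) (\<lambda>i j. if i = j then 0 else if {i, j} = {0, 1} then v + \<delta> else e2 / 2 + \<delta>)"
      using v that by (intro metric_iso) auto
    show ?thesis using F2_prod_tri[OF F A B, of 0 1 0 1 2 2] by (simp add: doubleton_eq_iff)
  qed
  have "((\<lambda>\<delta>. 2 * F (e1 / 2 + \<delta>) (e2 / 2 + \<delta>)) \<longlongrightarrow> 2 * F (e1 / 2) (e2 / 2)) (at_right 0)"
    using u v by (intro tendsto_mult tendsto_const F2_cont[OF F]) auto
  moreover have "eventually (\<lambda>\<delta>. F (u + \<delta>) (v + \<delta>) \<le> 2 * F (e1 / 2 + \<delta>) (e2 / 2 + \<delta>)) (at_right (0::real))"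
    using eventually_at_right_less[of "0::real"] by eventually_elim (rule ineq)
  ultimately show ?thesis using F2_cont[OF F u(1) v(1)] by (intro tendsto_le[OF trivial_limit_at_right_real]) auto
qed

lemma F2_dist:
  assumes F: "F \<in> F2" and pos: "0 \<le> a" "0 \<le> a'" "0 \<le> b" "0 \<le> b'"
    and e: "\<bar>a - a'\<bar> \<le> e1" "\<bar>b - b'\<bar> \<le> e2"
  shows "\<bar>F a b - F a' b'\<bar> \<le> 2 * F (e1 / 2) (e2 / 2)"
proof -
  have "F \<bar>a - a'\<bar> \<bar>b - b'\<bar> \<le> 2 * F (e1 / 2) (e2 / 2)" using e by (intro F2_iso[OF F]) auto
  moreover have "F a b \<le> F a' b' + F \<bar>a - a'\<bar> \<bar>b - b'\<bar>" by (rule F2_tri[OF F pos])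
  moreover have "F a' b' \<le> F a b + F \<bar>a' - a\<bar> \<bar>b' - b\<bar>" using pos by (intro F2_tri[OF F]) auto
  ultimately show ?thesis by (simp add: abs_minus_commute)
qed



lemma powr_cont_nonneg: "(r::real) \<ge> 1 \<Longrightarrow> continuous_on {0..} (\<lambda>x::real. x powr r)"
  by (intro continuous_on_powr' continuous_intros) auto

lemma powr_diff_mono:
  fixes s t h r :: real
  assumes r: "r \<ge> 1" and st: "0 \<le> s" "s \<le> t" and h: "0 \<le> h"
  shows "(s + h) powr r - s powr r \<le> (t + h) powr r - t powr r"
proof (rule DERIV_nonneg_imp_increasing_open[OF st(2)])
  fix x assume x: "s < x" "x < t"
  then have xp: "x > 0" using st by linarith
  have "((\<lambda>x. (x + h) powr r - x powr r) has_real_derivative (r * (x + h) powr (r - 1) * 1 - r * x powr (r - 1))) (at x)"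
    using xp h by (intro derivative_intros DERIV_chain2[OF has_real_derivative_powr]) (auto intro!: derivative_eq_intros)
  moreover have "r * x powr (r - 1) \<le> r * (x + h) powr (r - 1)"
    using r xp h by (intro mult_left_mono powr_mono2) auto
  ultimately show "\<exists>y. ((\<lambda>x. (x + h) powr r - x powr r) has_real_derivative y) (at x) \<and> 0 \<le> y"
    by (intro exI conjI) auto
next
  have "continuous_on {s..t} (\<lambda>x. (x + h) powr r)"
    by (rule continuous_on_compose2[OF powr_cont_nonneg[OF r]]) (use st h in \<open>auto intro!: continuous_intros\<close>)
  moreover have "continuous_on {s..t} (\<lambda>x. x powr r)"
    by (rule continuous_on_subset[OF powr_cont_nonneg[OF r]]) (use st in auto)
  ultimately show "continuous_on {s..t} (\<lambda>x. (x + h) powr r - x powr r)"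
    by (rule continuous_on_diff)
qed

definition Nr :: "real \<Rightarrow> real \<Rightarrow> real \<Rightarrow> real" where
  "Nr r a b = (a powr r + b powr r) powr (1 / r)"

lemma Nr_pow: "r \<ge> 1 \<Longrightarrow> 0 \<le> a \<Longrightarrow> 0 \<le> b \<Longrightarrow> Nr r a b powr r = a powr r + b powr r"
  unfolding Nr_def by (simp add: powr_powr)

lemma Nr_mono: "r \<ge> 1 \<Longrightarrow> 0 \<le> a \<Longrightarrow> a \<le> a' \<Longrightarrow> 0 \<le> b \<Longrightarrow> Nr r a b \<le> Nr r a' b"
  unfolding Nr_def by (intro powr_mono2 add_right_mono) auto

lemma Nr_lip1:
  assumes r: "r \<ge> 1" and pos: "0 \<le> a" "0 \<le> b" "0 \<le> h"
  shows "Nr r (a + h) b \<le> Nr r a b + h"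
proof -
  define c where "c = Nr r a b"
  have c0: "0 \<le> c" unfolding c_def Nr_def by simp
  have cr: "c powr r = a powr r + b powr r" unfolding c_def using Nr_pow r pos by simp
  have "a = (a powr r) powr (1 / r)" using r pos by (simp add: powr_powr)
  also have "\<dots> \<le> c" unfolding c_def Nr_def using r pos by (intro powr_mono2) auto
  finally have ac: "a \<le> c" .
  have "(a + h) powr r - a powr r \<le> (c + h) powr r - c powr r"
    by (rule powr_diff_mono[OF r pos(1) ac pos(3)])
  then have "(a + h) powr r + b powr r \<le> (c + h) powr r" using cr by simp
  then have "Nr r (a + h) b \<le> ((c + h) powr r) powr (1 / r)"
    unfolding Nr_def using r by (intro powr_mono2) auto
  also have "\<dots> = c + h" using r c0 pos by (simp add: powr_powr)
  finally show ?thesis unfolding c_def .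
qed

lemma Nr_lip:
  assumes r: "r \<ge> 1" and pos: "0 \<le> a" "0 \<le> a'" "0 \<le> b"
  shows "\<bar>Nr r a b - Nr r a' b\<bar> \<le> \<bar>a - a'\<bar>"
proof (cases "a' \<le> a")
  case True
  have "Nr r (a' + (a - a')) b \<le> Nr r a' b + (a - a')" using True by (intro Nr_lip1 r pos) auto
  moreover have "Nr r a' b \<le> Nr r a b" using True by (intro Nr_mono r pos)
  ultimately show ?thesis by simp
next
  case False
  have "Nr r (a + (a' - a)) b \<le> Nr r a b + (a' - a)" using False by (intro Nr_lip1 r pos) auto
  moreover have "Nr r a b \<le> Nr r a' b" using False by (intro Nr_mono r pos) auto
  ultimately show ?thesis by simp
qed

lemma Nr_comm: "Nr r a b = Nr r b a" unfolding Nr_def by (simp add: add.commute)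

lemma Fp_dist:
  assumes p: "1 \<le> p" and pos: "0 \<le> a" "0 \<le> a'" "0 \<le> b" "0 \<le> b'"
    and e: "\<bar>a - a'\<bar> \<le> e1" "\<bar>b - b'\<bar> \<le> e2"
  shows "\<bar>Fp p a b - Fp p a' b'\<bar> \<le> e1 + e2"
proof (cases "p = \<infinity>")
  case True
  then show ?thesis using e by (simp add: Fp_def)
next
  case False
  define r where "r = real_of_ereal p"
  have r: "r \<ge> 1" using p False unfolding r_def by (cases p) auto
  have F: "Fp p x y = Nr r x y" for x y using False by (simp add: Fp_def Nr_def r_def)
  have "\<bar>Nr r a b - Nr r a' b\<bar> \<le> \<bar>a - a'\<bar>" by (rule Nr_lip[OF r pos(1,2,3)])
  moreover have "\<bar>Nr r a' b - Nr r a' b'\<bar> \<le> \<bar>b - b'\<bar>"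
    using Nr_lip[OF r pos(3,4,2)] by (simp add: Nr_comm)
  ultimately show ?thesis unfolding F using e by linarith
qed



lemma prob_unitI: "prob_space unitI"
  unfolding unitI_def by (rule prob_space_restrict_space) auto

lemma alpha_exists: "\<exists>\<alpha>. \<alpha> \<in> unitI \<rightarrow>\<^sub>M (unitI \<Otimes>\<^sub>M unitI) \<and> distr unitI (unitI \<Otimes>\<^sub>M unitI) \<alpha> = unitI \<Otimes>\<^sub>M unitI"
proof -
  obtain g h where gh: "g \<in> (unitI \<Otimes>\<^sub>M unitI) \<rightarrow>\<^sub>M borel" "h \<in> (borel::real measure) \<rightarrow>\<^sub>M (unitI \<Otimes>\<^sub>M unitI)"
     "\<forall>x\<in>space (unitI \<Otimes>\<^sub>M unitI). h (g x) = x" using square_coding by blast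
  show ?thesis
    by (rule param_from_coding[OF prob_space_pair[OF prob_unitI prob_unitI] gh(1,2)]) (use gh(3) in blast)
qed

lemma mm_space_parts:
  assumes "mm_space (d, m)"
  shows "Metric_space (space m) d" "prob_space m" "\<And>x y. 0 \<le> d x y"
  using assms unfolding mm_space_def by (auto simp: Metric_space_def)

lemma param_exists:
  assumes X: "mm_space (d, m)"
  shows "\<exists>\<phi>. parameter (d, m) \<phi>"
proof -
  have a: "Metric_space (space m) d" "Metric_space.mcomplete (space m) d"
    "separable_space (Metric_space.mtopology (space m) d)"
    "sets m = sigma_sets (space m) {U. openin (Metric_space.mtopology (space m) d) U}" "prob_space m"
    using X unfolding mm_space_def by auto
  then have ne: "space m \<noteq> {}" using prob_space.not_empty by blast
  obtain g h where gh: "g \<in> m \<rightarrow>\<^sub>M borel" "h \<in> (borel::real measure) \<rightarrow>\<^sub>M m" "\<forall>x\<in>space m. h (g x) = x"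
    using polish_coding[OF a(1-4) ne] by blast
  obtain \<phi> where "\<phi> \<in> unitI \<rightarrow>\<^sub>M m \<and> distr unitI m \<phi> = m"
    using param_from_coding[OF a(5) gh(1,2)] gh(3) by blast
  then show ?thesis unfolding parameter_def by auto
qed

lemma param_prod:
  assumes p1: "parameter (d1, m1) \<phi>" and p2: "parameter (d2, m2) \<phi>'" and pr2: "prob_space m2"
    and \<alpha>: "\<alpha> \<in> unitI \<rightarrow>\<^sub>M (unitI \<Otimes>\<^sub>M unitI)" "distr unitI (unitI \<Otimes>\<^sub>M unitI) \<alpha> = unitI \<Otimes>\<^sub>M unitI"
  shows "parameter (D, m1 \<Otimes>\<^sub>M m2) (\<lambda>s. (\<phi> (fst (\<alpha> s)), \<phi>' (snd (\<alpha> s))))"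
proof -
  have m1: "\<phi> \<in> unitI \<rightarrow>\<^sub>M m1" "distr unitI m1 \<phi> = m1" using p1 by (auto simp: parameter_def)
  have m2: "\<phi>' \<in> unitI \<rightarrow>\<^sub>M m2" "distr unitI m2 \<phi>' = m2" using p2 by (auto simp: parameter_def)
  have pm: "(\<lambda>(x, y). (\<phi> x, \<phi>' y)) \<in> (unitI \<Otimes>\<^sub>M unitI) \<rightarrow>\<^sub>M (m1 \<Otimes>\<^sub>M m2)"
    using m1(1) m2(1) by measurable
  have eq: "(\<lambda>s. (\<phi> (fst (\<alpha> s)), \<phi>' (snd (\<alpha> s)))) = (\<lambda>(x, y). (\<phi> x, \<phi>' y)) \<circ> \<alpha>"
    by (auto simp: case_prod_beta)
  have meas: "(\<lambda>s. (\<phi> (fst (\<alpha> s)), \<phi>' (snd (\<alpha> s)))) \<in> unitI \<rightarrow>\<^sub>M (m1 \<Otimes>\<^sub>M m2)"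
    unfolding eq by (rule measurable_comp[OF \<alpha>(1) pm])
  have "distr unitI (m1 \<Otimes>\<^sub>M m2) ((\<lambda>(x, y). (\<phi> x, \<phi>' y)) \<circ> \<alpha>)
      = distr (distr unitI (unitI \<Otimes>\<^sub>M unitI) \<alpha>) (m1 \<Otimes>\<^sub>M m2) (\<lambda>(x, y). (\<phi> x, \<phi>' y))"
    using \<alpha>(1) pm by (simp add: distr_distr)
  also have "\<dots> = distr (unitI \<Otimes>\<^sub>M unitI) (m1 \<Otimes>\<^sub>M m2) (\<lambda>(x, y). (\<phi> x, \<phi>' y))" using \<alpha>(2) by simp
  also have "\<dots> = distr unitI m1 \<phi> \<Otimes>\<^sub>M distr unitI m2 \<phi>'"
    using m2(2) pr2 by (intro pair_measure_distr[symmetric] m1(1) m2(1)) (simp add: prob_space_imp_sigma_finite)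
  also have "\<dots> = m1 \<Otimes>\<^sub>M m2" using m1(2) m2(2) by simp
  finally show ?thesis using meas unfolding parameter_def eq by simp
qed

lemma measure_unitI_prod:
  assumes "A \<in> sets unitI" "B \<in> sets unitI"
  shows "measure (unitI \<Otimes>\<^sub>M unitI) (A \<times> B) = measure unitI A * measure unitI B"
proof -
  interpret P: prob_space unitI by (rule prob_unitI)
  have "emeasure (unitI \<Otimes>\<^sub>M unitI) (A \<times> B) = emeasure unitI A * emeasure unitI B"
    using assms by (rule P.emeasure_pair_measure_Times)
  also have "\<dots> = ennreal (measure unitI A * measure unitI B)"
    by (simp add: P.emeasure_eq_measure ennreal_mult)
  finally show ?thesis by (simp add: measure_def)
qed



definition boxset :: "'a mm \<Rightarrow> 'b mm \<Rightarrow> real set" where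
  "boxset X Y = {\<epsilon>. \<epsilon> \<ge> 0 \<and> (\<exists>\<phi> \<psi> I0. parameter X \<phi> \<and> parameter Y \<psi>
       \<and> I0 \<in> sets unitI \<and> measure unitI I0 \<ge> 1 - \<epsilon>
       \<and> (\<forall>s\<in>I0. \<forall>t\<in>I0. \<bar>fst X (\<phi> s) (\<phi> t) - fst Y (\<psi> s) (\<psi> t)\<bar> \<le> \<epsilon>))}"

lemma box_boxset: "box X Y = Inf (boxset X Y)"
  unfolding box_def boxset_def ..

lemma boxset_bdd: "bdd_below (boxset X Y)"
  unfolding boxset_def by (rule bdd_belowI[of _ 0]) auto

lemma box_le: "e \<in> boxset X Y \<Longrightarrow> box X Y \<le> e"
  unfolding box_boxset by (rule cInf_lower[OF _ boxset_bdd])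

lemma boxset_ne:
  assumes "mm_space X" "mm_space Y"
  shows "1 \<in> boxset X Y"
proof -
  obtain dX mX dY mY where XY: "X = (dX, mX)" "Y = (dY, mY)" by fastforce
  obtain \<phi> where "parameter X \<phi>" using param_exists assms(1) XY by blast
  moreover obtain \<psi> where "parameter Y \<psi>" using param_exists assms(2) XY by blast
  ultimately show ?thesis unfolding boxset_def by (intro CollectI conjI exI[of _ \<phi>] exI[of _ \<psi>] exI[of _ "{}"]) auto
qed

lemma box_nonneg: assumes "mm_space X" "mm_space Y" shows "0 \<le> box X Y"
proof -
  have ne: "boxset X Y \<noteq> {}" using boxset_ne[OF assms] by blast
  show ?thesis unfolding box_boxset by (rule cInf_greatest[OF ne]) (simp add: boxset_def)
qed

lemma box_seq:
  assumes "mm_space X" "mm_space Y"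
  obtains e where "\<And>n. e n \<in> boxset X Y" "e \<longlonglongrightarrow> box X Y"
proof -
  have ne: "boxset X Y \<noteq> {}" using boxset_ne[OF assms] by blast
  have "\<exists>e\<in>boxset X Y. e < box X Y + 1 / Suc n" for n
  proof -
    have "Inf (boxset X Y) < box X Y + 1 / Suc n" by (simp add: box_boxset)
    then show ?thesis using cInf_less_iff[OF ne boxset_bdd] by blast
  qed
  then obtain e where e: "\<And>n. e n \<in> boxset X Y" "\<And>n. e n < box X Y + 1 / Suc n" by metis
  have lo: "box X Y \<le> e n" for n using box_le e(1) by blast
  have "(\<lambda>n. box X Y + 1 / Suc n) \<longlonglongrightarrow> box X Y + 0"
    by (intro tendsto_add tendsto_const LIMSEQ_inverse_real_of_nat[unfolded inverse_eq_divide])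
  then have lim: "(\<lambda>n. box X Y + 1 / Suc n) \<longlonglongrightarrow> box X Y" by simp
  have "e \<longlonglongrightarrow> box X Y"
  proof (rule tendsto_sandwich[OF always_eventually always_eventually tendsto_const lim])
    show "\<forall>n. box X Y \<le> e n" using lo by blast
    show "\<forall>n. e n \<le> box X Y + 1 / Suc n" using e(2) less_imp_le by blast
  qed
  then show ?thesis using e(1) that by blast
qed

lemma prod_box_le:
  fixes dX :: "'a \<Rightarrow> 'a \<Rightarrow> real" and dY :: "'b \<Rightarrow> 'b \<Rightarrow> real"
    and dZ :: "'c \<Rightarrow> 'c \<Rightarrow> real" and dW :: "'d \<Rightarrow> 'd \<Rightarrow> real"
  assumes mm: "mm_space (dX, mX)" "mm_space (dY, mY)" "mm_space (dZ, mZ)" "mm_space (dW, mW)"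
    and e1: "e1 \<in> boxset (dX, mX) (dY, mY)" and e2: "e2 \<in> boxset (dZ, mZ) (dW, mW)"
    and G: "\<And>a a' b b'. 0 \<le> a \<Longrightarrow> 0 \<le> a' \<Longrightarrow> 0 \<le> b \<Longrightarrow> 0 \<le> b' \<Longrightarrow> \<bar>a - a'\<bar> \<le> e1 \<Longrightarrow> \<bar>b - b'\<bar> \<le> e2 \<Longrightarrow> \<bar>F a b - F a' b'\<bar> \<le> E"
    and E: "e1 + e2 \<le> E"
  shows "box (mm_prod F (dX, mX) (dZ, mZ)) (mm_prod F (dY, mY) (dW, mW)) \<le> E"
proof -
  obtain \<phi> \<psi> I0 where I: "parameter (dX, mX) \<phi>" "parameter (dY, mY) \<psi>" "I0 \<in> sets unitI"
    "measure unitI I0 \<ge> 1 - e1" "\<forall>s\<in>I0. \<forall>t\<in>I0. \<bar>dX (\<phi> s) (\<phi> t) - dY (\<psi> s) (\<psi> t)\<bar> \<le> e1" "e1 \<ge> 0"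
    using e1 unfolding boxset_def by auto
  obtain \<phi>' \<psi>' J0 where J: "parameter (dZ, mZ) \<phi>'" "parameter (dW, mW) \<psi>'" "J0 \<in> sets unitI"
    "measure unitI J0 \<ge> 1 - e2" "\<forall>s\<in>J0. \<forall>t\<in>J0. \<bar>dZ (\<phi>' s) (\<phi>' t) - dW (\<psi>' s) (\<psi>' t)\<bar> \<le> e2" "e2 \<ge> 0"
    using e2 unfolding boxset_def by auto
  obtain \<alpha> where \<alpha>: "\<alpha> \<in> unitI \<rightarrow>\<^sub>M (unitI \<Otimes>\<^sub>M unitI)" "distr unitI (unitI \<Otimes>\<^sub>M unitI) \<alpha> = unitI \<Otimes>\<^sub>M unitI"
    using alpha_exists by blast
  define D1 where "D1 = (\<lambda>(x::'a, y::'c) (x', y'). F (dX x x') (dZ y y'))"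
  define D2 where "D2 = (\<lambda>(x::'b, y::'d) (x', y'). F (dY x x') (dW y y'))"
  have P1: "mm_prod F (dX, mX) (dZ, mZ) = (D1, mX \<Otimes>\<^sub>M mZ)" by (simp add: mm_prod_def D1_def)
  have P2: "mm_prod F (dY, mY) (dW, mW) = (D2, mY \<Otimes>\<^sub>M mW)" by (simp add: mm_prod_def D2_def)
  define \<Phi> where "\<Phi> = (\<lambda>s. (\<phi> (fst (\<alpha> s)), \<phi>' (snd (\<alpha> s))))"
  define \<Psi> where "\<Psi> = (\<lambda>s. (\<psi> (fst (\<alpha> s)), \<psi>' (snd (\<alpha> s))))"
  have pa1: "parameter (D1, mX \<Otimes>\<^sub>M mZ) \<Phi>"
    unfolding \<Phi>_def by (rule param_prod[OF I(1) J(1) mm_space_parts(2)[OF mm(3)] \<alpha>])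
  have pa2: "parameter (D2, mY \<Otimes>\<^sub>M mW) \<Psi>"
    unfolding \<Psi>_def by (rule param_prod[OF I(2) J(2) mm_space_parts(2)[OF mm(4)] \<alpha>])
  define K where "K = \<alpha> -` (I0 \<times> J0) \<inter> space unitI"
  have IJ: "I0 \<times> J0 \<in> sets (unitI \<Otimes>\<^sub>M unitI)" using I(3) J(3) by (rule pair_measureI)
  have Ks: "K \<in> sets unitI" unfolding K_def by (rule measurable_sets[OF \<alpha>(1) IJ])
  have "measure unitI K = measure (distr unitI (unitI \<Otimes>\<^sub>M unitI) \<alpha>) (I0 \<times> J0)"
    unfolding K_def by (rule measure_distr[OF \<alpha>(1) IJ, symmetric])
  also have "\<dots> = measure unitI I0 * measure unitI J0"
    unfolding \<alpha>(2) by (rule measure_unitI_prod[OF I(3) J(3)])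
  finally have mK: "measure unitI K = measure unitI I0 * measure unitI J0" .
  interpret U: prob_space unitI by (rule prob_unitI)
  have "0 \<le> (1 - measure unitI I0) * (1 - measure unitI J0)"
    by (intro mult_nonneg_nonneg) (auto simp: U.prob_le_1)
  then have "measure unitI K \<ge> 1 - E" unfolding mK using I(4) J(4) E by (simp add: algebra_simps)
  moreover have "\<bar>D1 (\<Phi> s) (\<Phi> t) - D2 (\<Psi> s) (\<Psi> t)\<bar> \<le> E" if st: "s \<in> K" "t \<in> K" for s t
  proof -
    have a: "fst (\<alpha> s) \<in> I0" "snd (\<alpha> s) \<in> J0" "fst (\<alpha> t) \<in> I0" "snd (\<alpha> t) \<in> J0"
      using st unfolding K_def by (auto simp: mem_Times_iff)
    have d1: "\<bar>dX (\<phi> (fst (\<alpha> s))) (\<phi> (fst (\<alpha> t))) - dY (\<psi> (fst (\<alpha> s))) (\<psi> (fst (\<alpha> t)))\<bar> \<le> e1"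
      using I(5) a(1,3) by blast
    have d2: "\<bar>dZ (\<phi>' (snd (\<alpha> s))) (\<phi>' (snd (\<alpha> t))) - dW (\<psi>' (snd (\<alpha> s))) (\<psi>' (snd (\<alpha> t)))\<bar> \<le> e2"
      using J(5) a(2,4) by blast
    have "\<bar>F (dX (\<phi> (fst (\<alpha> s))) (\<phi> (fst (\<alpha> t)))) (dZ (\<phi>' (snd (\<alpha> s))) (\<phi>' (snd (\<alpha> t))))
         - F (dY (\<psi> (fst (\<alpha> s))) (\<psi> (fst (\<alpha> t)))) (dW (\<psi>' (snd (\<alpha> s))) (\<psi>' (snd (\<alpha> t))))\<bar> \<le> E"
      by (rule G[OF mm_space_parts(3)[OF mm(1)] mm_space_parts(3)[OF mm(2)]
          mm_space_parts(3)[OF mm(3)] mm_space_parts(3)[OF mm(4)] d1 d2])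
    then show ?thesis unfolding D1_def D2_def \<Phi>_def \<Psi>_def by simp
  qed
  moreover have "0 \<le> E" using E I(6) J(6) by linarith
  ultimately have "E \<in> boxset (D1, mX \<Otimes>\<^sub>M mZ) (D2, mY \<Otimes>\<^sub>M mW)"
    unfolding boxset_def using pa1 pa2 Ks by (intro CollectI conjI exI[of _ \<Phi>] exI[of _ \<Psi>] exI[of _ K]) auto
  then show ?thesis unfolding P1 P2 by (rule box_le)
qed



lemma boxset_nonneg: "e \<in> boxset X Y \<Longrightarrow> 0 \<le> e" unfolding boxset_def by simp

lemma main_pairs:
  fixes dX :: "'a \<Rightarrow> 'a \<Rightarrow> real" and dY :: "'b \<Rightarrow> 'b \<Rightarrow> real"
    and dZ :: "'c \<Rightarrow> 'c \<Rightarrow> real" and dW :: "'d \<Rightarrow> 'd \<Rightarrow> real"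
    and F :: "real \<Rightarrow> real \<Rightarrow> real"
  assumes mm: "mm_space (dX, mX)" "mm_space (dY, mY)" "mm_space (dZ, mZ)" "mm_space (dW, mW)"
    and F: "F \<in> F2"
  shows "box (mm_prod F (dX, mX) (dZ, mZ)) (mm_prod F (dY, mY) (dW, mW))
           \<le> max (box (dX, mX) (dY, mY) + box (dZ, mZ) (dW, mW)) (2 * F (box (dX, mX) (dY, mY) / 2) (box (dZ, mZ) (dW, mW) / 2))
         \<and> (\<forall>p::ereal. 1 \<le> p \<longrightarrow>
           box (mm_prod (Fp p) (dX, mX) (dZ, mZ)) (mm_prod (Fp p) (dY, mY) (dW, mW)) \<le> box (dX, mX) (dY, mY) + box (dZ, mZ) (dW, mW))"
proof -
  define b1 where "b1 = box (dX, mX) (dY, mY)"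
  define b2 where "b2 = box (dZ, mZ) (dW, mW)"
  obtain e1 where e1: "\<And>n. e1 n \<in> boxset (dX, mX) (dY, mY)" "e1 \<longlonglongrightarrow> b1"
    using box_seq[OF mm(1,2)] unfolding b1_def by blast
  obtain e2 where e2: "\<And>n. e2 n \<in> boxset (dZ, mZ) (dW, mW)" "e2 \<longlonglongrightarrow> b2"
    using box_seq[OF mm(3,4)] unfolding b2_def by blast
  have e1p: "0 \<le> e1 n" and e2p: "0 \<le> e2 n" for n using e1(1) e2(1) boxset_nonneg by blast+
  have b1p: "0 \<le> b1" unfolding b1_def by (rule box_nonneg[OF mm(1,2)])
  have b2p: "0 \<le> b2" unfolding b2_def by (rule box_nonneg[OF mm(3,4)])
  have part1: "box (mm_prod F (dX, mX) (dZ, mZ)) (mm_prod F (dY, mY) (dW, mW)) \<le> max (b1 + b2) (2 * F (b1 / 2) (b2 / 2))"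
  proof (rule LIMSEQ_le_const)
    have c: "continuous_on ({0..} \<times> {0..}) (\<lambda>(s, t). F s t)" using F unfolding F2_def by blast
    have g: "(\<lambda>n. (e1 n / 2, e2 n / 2)) \<longlonglongrightarrow> (b1 / 2, b2 / 2)"
      by (intro tendsto_Pair tendsto_divide e1(2) e2(2) tendsto_const) auto
    have "(\<lambda>n. (\<lambda>(s, t). F s t) (e1 n / 2, e2 n / 2)) \<longlonglongrightarrow> (\<lambda>(s, t). F s t) (b1 / 2, b2 / 2)"
      by (rule continuous_on_tendsto_compose[OF c g]) (use b1p b2p e1p e2p in auto)
    then have "(\<lambda>n. F (e1 n / 2) (e2 n / 2)) \<longlonglongrightarrow> F (b1 / 2) (b2 / 2)" by simp
    then show "(\<lambda>n. max (e1 n + e2 n) (2 * F (e1 n / 2) (e2 n / 2))) \<longlonglongrightarrow> max (b1 + b2) (2 * F (b1 / 2) (b2 / 2))"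
      by (intro tendsto_max tendsto_add tendsto_mult tendsto_const e1(2) e2(2))
    show "\<exists>N. \<forall>n\<ge>N. box (mm_prod F (dX, mX) (dZ, mZ)) (mm_prod F (dY, mY) (dW, mW)) \<le> max (e1 n + e2 n) (2 * F (e1 n / 2) (e2 n / 2))"
    proof (intro exI allI impI)
      fix n :: nat
      show "box (mm_prod F (dX, mX) (dZ, mZ)) (mm_prod F (dY, mY) (dW, mW)) \<le> max (e1 n + e2 n) (2 * F (e1 n / 2) (e2 n / 2))"
      proof (rule prod_box_le[OF mm e1(1) e2(1)])
        fix a a' b b' :: real
        assume "0 \<le> a" "0 \<le> a'" "0 \<le> b" "0 \<le> b'" "\<bar>a - a'\<bar> \<le> e1 n" "\<bar>b - b'\<bar> \<le> e2 n"
        then have "\<bar>F a b - F a' b'\<bar> \<le> 2 * F (e1 n / 2) (e2 n / 2)" by (rule F2_dist[OF F])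
        then show "\<bar>F a b - F a' b'\<bar> \<le> max (e1 n + e2 n) (2 * F (e1 n / 2) (e2 n / 2))" by linarith
      qed simp
    qed
  qed
  have part2: "box (mm_prod (Fp p) (dX, mX) (dZ, mZ)) (mm_prod (Fp p) (dY, mY) (dW, mW)) \<le> b1 + b2"
    if p: "1 \<le> p" for p :: ereal
  proof (rule LIMSEQ_le_const)
    show "(\<lambda>n. e1 n + e2 n) \<longlonglongrightarrow> b1 + b2" by (intro tendsto_add e1(2) e2(2))
    show "\<exists>N. \<forall>n\<ge>N. box (mm_prod (Fp p) (dX, mX) (dZ, mZ)) (mm_prod (Fp p) (dY, mY) (dW, mW)) \<le> e1 n + e2 n"
    proof (intro exI allI impI)
      fix n :: nat
      show "box (mm_prod (Fp p) (dX, mX) (dZ, mZ)) (mm_prod (Fp p) (dY, mY) (dW, mW)) \<le> e1 n + e2 n"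
      proof (rule prod_box_le[OF mm e1(1) e2(1)])
        fix a a' b b' :: real
        assume "0 \<le> a" "0 \<le> a'" "0 \<le> b" "0 \<le> b'" "\<bar>a - a'\<bar> \<le> e1 n" "\<bar>b - b'\<bar> \<le> e2 n"
        then show "\<bar>Fp p a b - Fp p a' b'\<bar> \<le> e1 n + e2 n" by (rule Fp_dist[OF p])
      qed simp
    qed
  qed
  show ?thesis using part1 part2 unfolding b1_def b2_def by blast
qed

theorem mainTheorem12:
  fixes X :: "'a mm" and Y :: "'b mm" and Z :: "'c mm" and W :: "'d mm"
    and F :: "real \<Rightarrow> real \<Rightarrow> real"
  assumes "mm_space X" "mm_space Y" "mm_space Z" "mm_space W"
    and "F \<in> F2"
  shows "box (mm_prod F X Z) (mm_prod F Y W)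
           \<le> max (box X Y + box Z W) (2 * F (box X Y / 2) (box Z W / 2))
         \<and> (\<forall>p::ereal. 1 \<le> p \<longrightarrow>
           box (mm_prod (Fp p) X Z) (mm_prod (Fp p) Y W) \<le> box X Y + box Z W)"
proof -
  obtain dX mX where X: "X = (dX, mX)" by fastforce
  obtain dY mY where Y: "Y = (dY, mY)" by fastforce
  obtain dZ mZ where Z: "Z = (dZ, mZ)" by fastforce
  obtain dW mW where W: "W = (dW, mW)" by fastforce
  show ?thesis using main_pairs[of dX mX dY mY dZ mZ dW mW F] assms unfolding X Y Z W by blast
qed


end
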